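(* In the network system of the context, fix $i$ and suppose $v_i$ is measurable and the $i$th subcontroller is $u_i=\hat K_iR_i\begin{bmatrix} y_i\\ v_i\end{bmatrix}$ with $R_i=\begin{bmatrix} I&-G_{y_iv_i}\end{bmatrix}$ and $\hat K_i$ a stabilizing controller for $G_{y_iu_i}$, while the other subcontrollers $u_j=K_jy_j$ ($j\ne i$) are arbitrary proper real rational transfer matrices. Then for every $j\neq i$ the closed-loop transfer matrix from $d_j$ to $u_i$ is zero; i.e. $u_i=0$ for every disturbance $d_j$ with $j\ne i$ (when $d_i=0$).
   Context: For $k=1,\dots,N$, subsystem $G_k$ is a proper real rational transfer matrix with inputs $(v_k,d_k,u_k)$ (interaction, disturbance, control) and outputs $(w_k,z_k,y_k)$ (interaction, evaluation, measurement), $G_{a_kb_k}$ denoting the block from $b_k$ to $a_k$. Stacked signals $\boldsymbol v=\mathrm{col}(v_1,\dots,v_N)$ etc.; the interaction is $\boldsymbol v=\boldsymbol L\boldsymbol w$ with $\boldsymbol L$ a proper real rational transfer matrix. All feedback systems are assumed well-posed. $\hat K_i$ is a stabilizing controller for $G_{y_iu_i}$ if the positive feedback loop $y_i=G_{y_iu_i}u_i$, $u_i=\hat K_iy_i$ is internally stable. *)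

theory Defs
  imports "Jordan_Normal_Form.Matrix" "HOL-Computational_Algebra.Fraction_Field"
    "HOL-Computational_Algebra.Polynomial" Complex_Main
begin

text \<open>Real rational functions (in the Laplace variable s): the fraction field of real polynomials.
  Transfer matrices are matrices over this field; signals (Laplace transforms) are vectors over it.\<close>
type_synonym rfun = "real poly fract"

definition rat_proper :: "rfun \<Rightarrow> bool" where
  "rat_proper x \<longleftrightarrow> (\<exists>p q. q \<noteq> 0 \<and> x = Fract p q \<and> degree p \<le> degree q)"

definition rat_stable :: "rfun \<Rightarrow> bool" where
  "rat_stable x \<longleftrightarrow> (\<exists>p q. q \<noteq> 0 \<and> x = Fract p q \<and> degree p \<le> degree q \<and>
      (\<forall>s::complex. poly (map_poly complex_of_real q) s = 0 \<longrightarrow> Re s < 0))"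

definition proper_mat :: "rfun mat \<Rightarrow> bool" where
  "proper_mat M \<longleftrightarrow> (\<forall>a<dim_row M. \<forall>b<dim_col M. rat_proper (M $$ (a,b)))"

definition stable_mat :: "rfun mat \<Rightarrow> bool" where
  "stable_mat M \<longleftrightarrow> (\<forall>a<dim_row M. \<forall>b<dim_col M. rat_stable (M $$ (a,b)))"

definition hcat :: "rfun mat \<Rightarrow> rfun mat \<Rightarrow> rfun mat" where
  "hcat A B = four_block_mat A B (0\<^sub>m 0 (dim_col A)) (0\<^sub>m 0 (dim_col B))"

text \<open>Positive feedback loop y = G u + e1, u = K y + e2 (G : p x m, K : m x p).
  Its map (e1,e2) -> (y,u) is the inverse of [[I,-G],[-K,I]]. Well-posed and internally stable
  iff this block matrix is invertible and all entries of its inverse are stable.\<close>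
definition stabilizing :: "rfun mat \<Rightarrow> rfun mat \<Rightarrow> bool" where
  "stabilizing K G \<longleftrightarrow>
     (let p = dim_row G; m = dim_col G;
          A = four_block_mat (1\<^sub>m p) (- G) (- K) (1\<^sub>m m)
      in K \<in> carrier_mat m p \<and>
         (\<exists>B. B \<in> carrier_mat (p+m) (p+m) \<and> inverts_mat A B \<and> inverts_mat B A \<and> stable_mat B))"

fun stackv :: "(nat \<Rightarrow> rfun vec) \<Rightarrow> nat \<Rightarrow> rfun vec" where
  "stackv f 0 = vec 0 (\<lambda>_. 0)"
| "stackv f (Suc n) = stackv f n @\<^sub>v f n"

datatype sig_in = V | D | U     (* interaction, disturbance, control *)
datatype sig_out = W | Z | Y    (* interaction, evaluation, measurement *)

end

theory Submission
  imports Defs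
begin

theorem proposition5:
  fixes N i :: nat
    and din :: "nat \<Rightarrow> sig_in \<Rightarrow> nat" and dout :: "nat \<Rightarrow> sig_out \<Rightarrow> nat"
    and G :: "nat \<Rightarrow> sig_out \<Rightarrow> sig_in \<Rightarrow> rfun mat"
    and L :: "rfun mat"
    and K :: "nat \<Rightarrow> rfun mat" and Khat :: "rfun mat"
    and v d u w z y :: "nat \<Rightarrow> rfun vec"
  assumes iN: "i < N"
    and G_dims: "\<And>k a b. k < N \<Longrightarrow> G k a b \<in> carrier_mat (dout k a) (din k b)"
    and G_proper: "\<And>k a b. k < N \<Longrightarrow> proper_mat (G k a b)"
    and L_dims: "L \<in> carrier_mat (\<Sum>k<N. din k V) (\<Sum>k<N. dout k W)"
    and L_proper: "proper_mat L"
    and K_dims: "\<And>j. j < N \<Longrightarrow> j \<noteq> i \<Longrightarrow> K j \<in> carrier_mat (din j U) (dout j Y)"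
    and K_proper: "\<And>j. j < N \<Longrightarrow> j \<noteq> i \<Longrightarrow> proper_mat (K j)"
    and Khat_dims: "Khat \<in> carrier_mat (din i U) (dout i Y)"
    and Khat_stab: "stabilizing Khat (G i Y U)"
    and sig_dims: "\<And>k. k < N \<Longrightarrow> dim_vec (v k) = din k V \<and> dim_vec (d k) = din k D
        \<and> dim_vec (u k) = din k U \<and> dim_vec (w k) = dout k W
        \<and> dim_vec (z k) = dout k Z \<and> dim_vec (y k) = dout k Y"
    and sys_w: "\<And>k. k < N \<Longrightarrow> w k = G k W V *\<^sub>v v k + G k W D *\<^sub>v d k + G k W U *\<^sub>v u k"
    and sys_z: "\<And>k. k < N \<Longrightarrow> z k = G k Z V *\<^sub>v v k + G k Z D *\<^sub>v d k + G k Z U *\<^sub>v u k"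
    and sys_y: "\<And>k. k < N \<Longrightarrow> y k = G k Y V *\<^sub>v v k + G k Y D *\<^sub>v d k + G k Y U *\<^sub>v u k"
    and interaction: "stackv v N = L *\<^sub>v stackv w N"
    and ctrl_j: "\<And>j. j < N \<Longrightarrow> j \<noteq> i \<Longrightarrow> u j = K j *\<^sub>v y j"
    and ctrl_i: "u i = Khat *\<^sub>v (hcat (1\<^sub>m (dout i Y)) (- G i Y V) *\<^sub>v (y i @\<^sub>v v i))"
    and d_i: "d i = 0\<^sub>v (din i D)"
  shows "u i = 0\<^sub>v (din i U)"
proof -
  define p where "p = dout i Y"
  define m where "m = din i U"
  define Gu where "Gu = G i Y U"
  define Gv where "Gv = G i Y V"
  have Gu: "Gu \<in> carrier_mat p m" using G_dims[OF iN] unfolding Gu_def p_def m_def by auto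
  have Gv: "Gv \<in> carrier_mat p (din i V)" using G_dims[OF iN] unfolding Gv_def p_def by auto
  have Gd: "G i Y D \<in> carrier_mat p (din i D)" using G_dims[OF iN] unfolding p_def by auto
  have K: "Khat \<in> carrier_mat m p" using Khat_dims unfolding p_def m_def by auto
  have yc: "y i \<in> carrier_vec p" and vc: "v i \<in> carrier_vec (din i V)"
    and uc: "u i \<in> carrier_vec m"
    using sig_dims[OF iN] unfolding p_def m_def carrier_vec_def by auto
  have app0: "\<And>x (w::rfun vec). dim_vec w = 0 \<Longrightarrow> x @\<^sub>v w = x"
    by (rule eq_vecI) auto
  have z0: "\<And>a b. 0\<^sub>v a @\<^sub>v 0\<^sub>v b = (0\<^sub>v (a+b) :: rfun vec)"
    by (rule eq_vecI) auto
  have dcG: "dim_col Gv = din i V" using Gv by auto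
  have h: "hcat (1\<^sub>m p) (- Gv) *\<^sub>v (y i @\<^sub>v v i) = 1\<^sub>m p *\<^sub>v y i + (- Gv) *\<^sub>v v i"
  proof -
    have "hcat (1\<^sub>m p) (- Gv) = four_block_mat (1\<^sub>m p) (- Gv) (0\<^sub>m 0 p) (0\<^sub>m 0 (din i V))"
      unfolding hcat_def dcG[symmetric] by simp
    also have "\<dots> *\<^sub>v (y i @\<^sub>v v i) = (1\<^sub>m p *\<^sub>v y i + (- Gv) *\<^sub>v v i) @\<^sub>v (0\<^sub>m 0 p *\<^sub>v y i + 0\<^sub>m 0 (din i V) *\<^sub>v v i)"
      by (rule four_block_mat_mult_vec) (use Gv yc vc in auto)
    also have "\<dots> = 1\<^sub>m p *\<^sub>v y i + (- Gv) *\<^sub>v v i" by (rule app0) simp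
    finally show ?thesis .
  qed
  have yeq: "y i = Gv *\<^sub>v v i + Gu *\<^sub>v u i"
  proof -
    have "G i Y D *\<^sub>v d i = 0\<^sub>v p" using d_i Gd by auto
    moreover have "Gv *\<^sub>v v i \<in> carrier_vec p" using Gv vc by auto
    ultimately show ?thesis using sys_y[OF iN] unfolding Gu_def[symmetric] Gv_def[symmetric] by simp
  qed
  have r: "1\<^sub>m p *\<^sub>v y i + (- Gv) *\<^sub>v v i = Gu *\<^sub>v u i"
  proof -
    have a: "Gv *\<^sub>v v i \<in> carrier_vec p" "Gu *\<^sub>v u i \<in> carrier_vec p" using Gv Gu vc uc by auto
    have "(- Gv) *\<^sub>v v i = - (Gv *\<^sub>v v i)" using Gv vc by auto
    then have "1\<^sub>m p *\<^sub>v y i + (- Gv) *\<^sub>v v i = (Gv *\<^sub>v v i + Gu *\<^sub>v u i) + - (Gv *\<^sub>v v i)"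
      using yc yeq by simp
    also have "\<dots> = Gu *\<^sub>v u i" using a by (simp add: comm_add_vec assoc_add_vec[symmetric])
    finally show ?thesis .
  qed
  have ueq: "u i = Khat *\<^sub>v (Gu *\<^sub>v u i)"
    using ctrl_i h r unfolding Gv_def p_def by simp
  obtain B where B: "B \<in> carrier_mat (p+m) (p+m)"
    and inv: "inverts_mat B (four_block_mat (1\<^sub>m p) (- Gu) (- Khat) (1\<^sub>m m))"
    using Khat_stab Gu unfolding stabilizing_def Let_def Gu_def by auto
  define A where "A = four_block_mat (1\<^sub>m p) (- Gu) (- Khat) (1\<^sub>m m)"
  have A: "A \<in> carrier_mat (p+m) (p+m)" unfolding A_def
    using Gu K by (intro four_block_carrier_mat) auto
  have BA: "B * A = 1\<^sub>m (p+m)" using inv B unfolding inverts_mat_def A_def by auto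
  define x where "x = Gu *\<^sub>v u i @\<^sub>v u i"
  have xc: "x \<in> carrier_vec (p+m)" unfolding x_def using Gu uc by auto
  have Ax: "A *\<^sub>v x = 0\<^sub>v p @\<^sub>v 0\<^sub>v m"
  proof -
    have "A *\<^sub>v x = (1\<^sub>m p *\<^sub>v (Gu *\<^sub>v u i) + (- Gu) *\<^sub>v u i) @\<^sub>v ((- Khat) *\<^sub>v (Gu *\<^sub>v u i) + 1\<^sub>m m *\<^sub>v u i)"
      unfolding A_def x_def
      by (rule four_block_mat_mult_vec) (use Gu K uc in auto)
    also have "1\<^sub>m p *\<^sub>v (Gu *\<^sub>v u i) + (- Gu) *\<^sub>v u i = 0\<^sub>v p"
      using Gu uc by auto
    also have "(- Khat) *\<^sub>v (Gu *\<^sub>v u i) + 1\<^sub>m m *\<^sub>v u i = 0\<^sub>v m"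
    proof -
      have "(- Khat) *\<^sub>v (Gu *\<^sub>v u i) = - (Khat *\<^sub>v (Gu *\<^sub>v u i))"
        using K Gu uc by auto
      then show ?thesis using ueq[symmetric] uc by auto
    qed
    finally show ?thesis .
  qed
  have "x = (B * A) *\<^sub>v x" using BA xc by auto
  also have "\<dots> = B *\<^sub>v (A *\<^sub>v x)" using B A xc by (metis assoc_mult_mat_vec)
  also have "\<dots> = B *\<^sub>v 0\<^sub>v (p+m)" unfolding Ax using z0 by metis 
  also have "\<dots> = 0\<^sub>v (p+m)" using B by auto
  finally have "x = 0\<^sub>v p @\<^sub>v 0\<^sub>v m" using z0 by metis
  then have "u i = 0\<^sub>v m" unfolding x_def using Gu uc
    by (subst (asm) append_vec_eq[of _ p]) auto
  then show ?thesis unfolding m_def .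
qed

end
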